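(* Consider the symmetric coordination game in which (action 1, action 1) gives payoffs $R/R$, (action 1, action 2) gives $S/T$, (action 2, action 1) gives $T/S$, and (action 2, action 2) gives $P/P$ (first number the row player's payoff), with $R>T$ and $P>S$. Then the projected SA-IGA self-play dynamics on $[0,1]^4$ in the variables $(p_1,p_2,w_1,w_2)$ has two types of stable equilibrium points: (1) $(1,1,w_1^*,w_2^* )$, whenever $w_i^*\in[0,1]$ and $\frac{T-S}{2}w_i^*>T-R$ for $i=1,2$; (2) $(0,0,w_1^*,w_2^* )$, whenever $w_i^*\in[0,1]$ and $\frac{T-S}{2}w_i^*<P-S$ for $i=1,2$.
   Context: Player $i\in\{1,2\}$ plays action 1 with probability $p_i\in[0,1]$. Let $r_i^{jk}$ be the payoff to $i$ when $i$ plays $j$ and the opponent $-i$ plays $k$ (here $r_i^{11}=R, r_i^{12}=S, r_i^{21}=T, r_i^{22}=P$ for both $i$). The expected payoff is $V_i=\sum_{j,k}\pi_i(j)\pi_{-i}(k)r_i^{jk}$ with $\pi_i(1)=p_i,\pi_i(2)=1-p_i$; $V^{soc}=\frac12(V_1+V_2)$; player $i$'s overall payoff is $\tilde V_i=(1-w_i)V_i+w_iV^{soc}$ with social attitude $w_i\in[0,1]$. The unconstrained SA-IGA vector field $F$ on $x=(p_1,p_2,w_1,w_2)$ is $F_{p_i}=\partial\tilde V_i/\partial p_i$ (derivative in the player's own $p_i$) and $F_{w_i}=\varepsilon(V_i-V^{soc})$ for a constant $\varepsilon>0$. The projected dynamics on $[0,1]^4$ is $\dot x_j=F_j(x)$ for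 each coordinate, except that $\dot x_j=0$ whenever $x_j=0$ and $F_j(x)<0$, or $x_j=1$ and $F_j(x)>0$. An equilibrium point is a point where the projected vector field vanishes; it is stable if for every $\eta>0$ there is $\delta>0$ such that every trajectory starting within distance $\delta$ of it stays within distance $\eta$ of it for all future time. *)

theory Defs
  imports "HOL-Analysis.Analysis"
begin

type_synonym state = "real \<times> real \<times> real \<times> real"

definition p1_of :: "state \<Rightarrow> real" where "p1_of x = fst x"
definition p2_of :: "state \<Rightarrow> real" where "p2_of x = fst (snd x)"
definition w1_of :: "state \<Rightarrow> real" where "w1_of x = fst (snd (snd x))"
definition w2_of :: "state \<Rightarrow> real" where "w2_of x = snd (snd (snd x))"

definition strat :: "real \<Rightarrow> nat \<Rightarrow> real" where
  "strat p j = (if j = 1 then p else 1 - p)"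

definition rpay :: "real \<Rightarrow> real \<Rightarrow> real \<Rightarrow> real \<Rightarrow> nat \<Rightarrow> nat \<Rightarrow> real" where
  "rpay R S T P j k =
     (if j = 1 then (if k = 1 then R else S) else (if k = 1 then T else P))"

definition Vpay :: "real \<Rightarrow> real \<Rightarrow> real \<Rightarrow> real \<Rightarrow> real \<Rightarrow> real \<Rightarrow> real" where
  "Vpay R S T P p_own p_opp =
     (\<Sum>j\<in>{1::nat,2}. \<Sum>k\<in>{1::nat,2}. strat p_own j * strat p_opp k * rpay R S T P j k)"

definition V1 :: "real \<Rightarrow> real \<Rightarrow> real \<Rightarrow> real \<Rightarrow> real \<Rightarrow> real \<Rightarrow> real" where
  "V1 R S T P p1 p2 = Vpay R S T P p1 p2"
definition V2 :: "real \<Rightarrow> real \<Rightarrow> real \<Rightarrow> real \<Rightarrow> real \<Rightarrow> real \<Rightarrow> real" where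
  "V2 R S T P p1 p2 = Vpay R S T P p2 p1"
definition Vsoc :: "real \<Rightarrow> real \<Rightarrow> real \<Rightarrow> real \<Rightarrow> real \<Rightarrow> real \<Rightarrow> real" where
  "Vsoc R S T P p1 p2 = (V1 R S T P p1 p2 + V2 R S T P p1 p2) / 2"

definition Vt1 :: "real \<Rightarrow> real \<Rightarrow> real \<Rightarrow> real \<Rightarrow> real \<Rightarrow> real \<Rightarrow> real \<Rightarrow> real" where
  "Vt1 R S T P w1 p1 p2 = (1 - w1) * V1 R S T P p1 p2 + w1 * Vsoc R S T P p1 p2"
definition Vt2 :: "real \<Rightarrow> real \<Rightarrow> real \<Rightarrow> real \<Rightarrow> real \<Rightarrow> real \<Rightarrow> real \<Rightarrow> real" where
  "Vt2 R S T P w2 p1 p2 = (1 - w2) * V2 R S T P p1 p2 + w2 * Vsoc R S T P p1 p2"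

definition F_field :: "real \<Rightarrow> real \<Rightarrow> real \<Rightarrow> real \<Rightarrow> real \<Rightarrow> state \<Rightarrow> state" where
  "F_field R S T P \<epsilon> x =
    (let p1 = p1_of x; p2 = p2_of x; w1 = w1_of x; w2 = w2_of x in
     (deriv (\<lambda>q. Vt1 R S T P w1 q p2) p1,
      deriv (\<lambda>q. Vt2 R S T P w2 p1 q) p2,
      \<epsilon> * (V1 R S T P p1 p2 - Vsoc R S T P p1 p2),
      \<epsilon> * (V2 R S T P p1 p2 - Vsoc R S T P p1 p2)))"

definition proj1 :: "real \<Rightarrow> real \<Rightarrow> real" where
  "proj1 xj fj = (if (xj = 0 \<and> fj < 0) \<or> (xj = 1 \<and> fj > 0) then 0 else fj)"

definition PF_field :: "real \<Rightarrow> real \<Rightarrow> real \<Rightarrow> real \<Rightarrow> real \<Rightarrow> state \<Rightarrow> state" where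
  "PF_field R S T P \<epsilon> x =
    (let f = F_field R S T P \<epsilon> x in
     (proj1 (p1_of x) (p1_of f), proj1 (p2_of x) (p2_of f),
      proj1 (w1_of x) (w1_of f), proj1 (w2_of x) (w2_of f)))"

definition in_cube :: "state \<Rightarrow> bool" where
  "in_cube x \<longleftrightarrow> p1_of x \<in> {0..1} \<and> p2_of x \<in> {0..1} \<and> w1_of x \<in> {0..1} \<and> w2_of x \<in> {0..1}"

definition trajectory :: "real \<Rightarrow> real \<Rightarrow> real \<Rightarrow> real \<Rightarrow> real \<Rightarrow> (real \<Rightarrow> state) \<Rightarrow> bool" where
  "trajectory R S T P \<epsilon> x \<longleftrightarrow>
     continuous_on {0..} x \<and> (\<forall>t\<ge>0. in_cube (x t)) \<and>
     (\<forall>t\<ge>0. (x has_vector_derivative PF_field R S T P \<epsilon> (x t)) (at t within {t..}))"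

definition equilibrium :: "real \<Rightarrow> real \<Rightarrow> real \<Rightarrow> real \<Rightarrow> real \<Rightarrow> state \<Rightarrow> bool" where
  "equilibrium R S T P \<epsilon> e \<longleftrightarrow> PF_field R S T P \<epsilon> e = 0"

definition stable :: "real \<Rightarrow> real \<Rightarrow> real \<Rightarrow> real \<Rightarrow> real \<Rightarrow> state \<Rightarrow> bool" where
  "stable R S T P \<epsilon> e \<longleftrightarrow>
     (\<forall>\<eta>>0. \<exists>\<delta>>0. \<forall>x. trajectory R S T P \<epsilon> x \<and> dist (x 0) e < \<delta> \<longrightarrow>
        (\<forall>t\<ge>0. dist (x t) e < \<eta>))"

end

theory Submission
  imports Defs
begin


lemma right_deriv_le_eps:
  fixes g g' :: "real \<Rightarrow> real" and a b e :: real
  assumes ab: "a \<le> b" and cont: "continuous_on {a..b} g" and e: "e > 0"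
    and der: "\<And>s. a \<le> s \<Longrightarrow> s < b \<Longrightarrow> (g has_real_derivative g' s) (at s within {s..}) \<and> g' s \<le> 0"
  shows "g b \<le> g a + e * (b - a)"
proof -
  define A where "A = {s \<in> {a..b}. g s \<le> g a + e * (s - a)}"
  have cl: "closed A" unfolding A_def
    by (intro continuous_on_closed_Collect_le cont continuous_intros)
  have aA: "a \<in> A" using ab by (simp add: A_def)
  have bdd: "bdd_above A" unfolding A_def by (rule bdd_aboveI[of _ b]) auto
  define m where "m = Sup A"
  have mA: "m \<in> A" unfolding m_def using closed_contains_Sup[OF _ bdd cl] aA by blast
  have mb: "m \<le> b" "a \<le> m" using mA by (auto simp: A_def)
  have "m = b"
  proof (rule ccontr)
    assume "m \<noteq> b"
    with mb have mlt: "m < b" by simp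
    from der[OF mb(2) mlt] have d: "(g has_real_derivative g' m) (at m within {m..})" and g0: "g' m \<le> 0" by auto
    have "((\<lambda>y. (g y - g m) / (y - m)) \<longlongrightarrow> g' m) (at_right m)"
      using d by (simp add: has_field_derivative_iff at_within_Ici_at_right)
    moreover have "g' m < e" using g0 e by simp
    ultimately have "eventually (\<lambda>y. (g y - g m) / (y - m) < e) (at_right m)"
      by (rule order_tendstoD(2))
    then obtain d where dm: "d > m" and hd: "\<And>y. y > m \<Longrightarrow> y < d \<Longrightarrow> (g y - g m) / (y - m) < e"
      by (auto simp: eventually_at_right_field)
    define y where "y = (m + min d b) / 2"
    have y1: "y > m" "y < d" "y \<le> b" using dm mlt by (auto simp: y_def)
    have "(g y - g m) / (y - m) < e" using hd y1 by auto
    then have "g y - g m < e * (y - m)" using y1 by (simp add: divide_less_eq)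
    moreover have "g m \<le> g a + e * (m - a)" using mA by (simp add: A_def)
    ultimately have "g y \<le> g a + e * (y - a)" by (simp add: algebra_simps)
    then have "y \<in> A" using y1 mb by (simp add: A_def)
    then have "y \<le> m" unfolding m_def using bdd by (rule cSup_upper)
    with y1 show False by simp
  qed
  then show ?thesis using mA by (simp add: A_def)
qed

lemma right_deriv_nonincr:
  fixes g g' :: "real \<Rightarrow> real" and a b :: real
  assumes ab: "a \<le> b" and cont: "continuous_on {a..b} g"
    and der: "\<And>s. a \<le> s \<Longrightarrow> s < b \<Longrightarrow> (g has_real_derivative g' s) (at s within {s..}) \<and> g' s \<le> 0"
  shows "g b \<le> g a"
proof (rule ccontr)
  assume "\<not> g b \<le> g a"
  define e where "e = (g b - g a) / (2 * (b - a + 1))"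
  have e: "e > 0" using \<open>\<not> g b \<le> g a\<close> ab by (simp add: e_def)
  have "g b \<le> g a + e * (b - a)" by (rule right_deriv_le_eps[OF ab cont e der])
  moreover have "e * (b - a) < g b - g a"
  proof -
    have "e * (b - a) \<le> e * (b - a + 1)" using e by simp
    also have "\<dots> = (g b - g a) / 2" using ab by (simp add: e_def field_simps)
    finally show ?thesis using \<open>\<not> g b \<le> g a\<close> by simp
  qed
  ultimately show False by simp
qed

lemma dist_sq:
  fixes y :: state
  shows "(dist y (q,q,a,b))^2 = (fst y - q)^2 + (fst (snd y) - q)^2 + (fst (snd (snd y)) - a)^2 + (snd (snd (snd y)) - b)^2"
  by (cases y) (simp add: dist_Pair_Pair dist_real_def add_nonneg_nonneg)

lemma vd_comps:
  fixes x :: "real \<Rightarrow> state"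
  assumes "(x has_vector_derivative v) F"
  shows "((\<lambda>t. fst (x t)) has_real_derivative fst v) F"
    and "((\<lambda>t. fst (snd (x t))) has_real_derivative fst (snd v)) F"
    and "((\<lambda>t. fst (snd (snd (x t)))) has_real_derivative fst (snd (snd v))) F"
    and "((\<lambda>t. snd (snd (snd (x t)))) has_real_derivative snd (snd (snd v))) F"
  using assms unfolding has_real_derivative_iff_has_vector_derivative has_vector_derivative_def
  by (auto intro!: derivative_eq_intros)

lemma stab_general:
  fixes Phi :: "state \<Rightarrow> state" and q a b c M r :: real
  assumes c: "c > 0" and M: "M \<ge> 0" and r: "r > 0" "r \<le> 1"
  and H: "\<And>y. dist y (q,q,a,b) \<le> r \<Longrightarrow> in_cube y \<Longrightarrow>
     (fst y - q) * fst (Phi y) \<le> - c * \<bar>fst y - q\<bar> \<and>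
     (fst (snd y) - q) * fst (snd (Phi y)) \<le> - c * \<bar>fst (snd y) - q\<bar> \<and>
     \<bar>fst (snd (snd (Phi y)))\<bar> \<le> M * (\<bar>fst y - q\<bar> + \<bar>fst (snd y) - q\<bar>) \<and>
     \<bar>snd (snd (snd (Phi y)))\<bar> \<le> M * (\<bar>fst y - q\<bar> + \<bar>fst (snd y) - q\<bar>)"
  shows "\<forall>\<eta>>0. \<exists>\<delta>>0. \<forall>x. (continuous_on {0..} x \<and> (\<forall>t\<ge>0. in_cube (x t)) \<and>
     (\<forall>t\<ge>0. (x has_vector_derivative Phi (x t)) (at t within {t..}))) \<and>
     dist (x 0) (q,q,a,b) < \<delta> \<longrightarrow> (\<forall>t\<ge>0. dist (x t) (q,q,a,b) < \<eta>)"
proof (intro allI impI)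
  define e :: state where "e = (q,q,a,b)"
  define K where "K = 2 * M / c + 1"
  have K1: "K \<ge> 1" using M c by (simp add: K_def)
  have Kc: "K * c \<ge> 2 * M" using c by (simp add: K_def field_simps)
  define L where "L y = K * ((fst y - q)^2 + (fst (snd y) - q)^2) + (fst (snd (snd y)) - a)^2 + (snd (snd (snd y)) - b)^2" for y :: state
  have Lge: "(dist y e)^2 \<le> L y" for y
  proof -
    have "(fst y - q)^2 + (fst (snd y) - q)^2 \<le> K * ((fst y - q)^2 + (fst (snd y) - q)^2)"
      using mult_right_mono[OF K1, of "(_::real)^2 + (_::real)^2"] by simp
    then show ?thesis unfolding e_def dist_sq L_def by simp
  qed
  have Lle: "L y \<le> K * (dist y e)^2" for y
  proof -
    have "(fst (snd (snd y)) - a)^2 + (snd (snd (snd y)) - b)^2 \<le> K * ((fst (snd (snd y)) - a)^2 + (snd (snd (snd y)) - b)^2)"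
      using mult_right_mono[OF K1, of "(_::real)^2 + (_::real)^2"] by simp
    then show ?thesis unfolding e_def dist_sq L_def by (simp add: algebra_simps)
  qed
  fix \<eta> :: real assume eta: "\<eta> > 0"
  define \<rho> where "\<rho> = min \<eta> r"
  have rho: "\<rho> > 0" "\<rho> \<le> \<eta>" "\<rho> \<le> r" using eta r by (auto simp: \<rho>_def)
  define \<delta> where "\<delta> = \<rho> / (2 * K)"
  have del: "\<delta> > 0" using rho K1 by (simp add: \<delta>_def)
  have del2: "\<delta> < \<rho>" using rho K1 by (simp add: \<delta>_def field_simps)
  have Kdel: "K * \<delta>^2 < \<rho>^2"
  proof -
    have "K * \<delta>^2 = \<rho>^2 / (4 * K)" using K1 by (simp add: \<delta>_def power2_eq_square field_simps)
    also have "\<dots> < \<rho>^2" using K1 rho by (simp add: field_simps)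
    finally show ?thesis .
  qed
  show "\<exists>\<delta>>0. \<forall>x. (continuous_on {0..} x \<and> (\<forall>t\<ge>0. in_cube (x t)) \<and>
     (\<forall>t\<ge>0. (x has_vector_derivative Phi (x t)) (at t within {t..}))) \<and>
     dist (x 0) (q,q,a,b) < \<delta> \<longrightarrow> (\<forall>t\<ge>0. dist (x t) (q,q,a,b) < \<eta>)"
  proof (intro exI[of _ \<delta>] conjI allI impI del)
    fix x :: "real \<Rightarrow> state" and t :: real
    assume asm: "(continuous_on {0..} x \<and> (\<forall>t\<ge>0. in_cube (x t)) \<and>
     (\<forall>t\<ge>0. (x has_vector_derivative Phi (x t)) (at t within {t..}))) \<and>
     dist (x 0) (q,q,a,b) < \<delta>" and t: "t \<ge> 0"
    then have xc: "continuous_on {0..} x" and xcube: "\<And>t. t \<ge> 0 \<Longrightarrow> in_cube (x t)"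
      and xd: "\<And>t. t \<ge> 0 \<Longrightarrow> (x has_vector_derivative Phi (x t)) (at t within {t..})"
      and x0: "dist (x 0) e < \<delta>" by (auto simp: e_def)
    show "dist (x t) (q,q,a,b) < \<eta>"
    proof (rule ccontr)
      assume "\<not> dist (x t) (q,q,a,b) < \<eta>"
      then have xt: "\<rho> \<le> dist (x t) e" using rho by (simp add: e_def)
      define A where "A = {s \<in> {0..t}. \<rho> \<le> dist (x s) e}"
      have xct: "continuous_on {0..t} x" using xc by (rule continuous_on_subset) auto
      have clA: "closed A" unfolding A_def
        by (intro continuous_on_closed_Collect_le continuous_intros xct)
      have tA: "t \<in> A" using t xt by (simp add: A_def)
      have bddA: "bdd_below A" unfolding A_def by (rule bdd_belowI[of _ 0]) auto
      define t1 where "t1 = Inf A"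
      have t1A: "t1 \<in> A" unfolding t1_def using closed_contains_Inf[OF _ bddA clA] tA by blast
      then have t10: "0 \<le> t1" "t1 \<le> t" and xt1: "\<rho> \<le> dist (x t1) e" by (auto simp: A_def)
      have before: "dist (x s) e < \<rho>" if "0 \<le> s" "s < t1" for s
      proof (rule ccontr)
        assume "\<not> dist (x s) e < \<rho>"
        then have "s \<in> A" using that t10 by (simp add: A_def)
        then have "t1 \<le> s" unfolding t1_def using bddA by (rule cInf_lower)
        with that show False by simp
      qed
      define D where "D s = K * (2 * (fst (x s) - q) * fst (Phi (x s)) + 2 * (fst (snd (x s)) - q) * fst (snd (Phi (x s))))
         + 2 * (fst (snd (snd (x s))) - a) * fst (snd (snd (Phi (x s)))) + 2 * (snd (snd (snd (x s))) - b) * snd (snd (snd (Phi (x s))))" for s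
      have mono: "L (x t1) \<le> L (x 0)"
      proof (rule right_deriv_nonincr[where g = "\<lambda>s. L (x s)" and g' = D and a = 0 and b = t1])
        show "0 \<le> t1" by (rule t10)
        have "continuous_on {0..t1} x" using xc by (rule continuous_on_subset) auto
        then show "continuous_on {0..t1} (\<lambda>s. L (x s))" unfolding L_def
          by (intro continuous_intros)
      next
        fix s assume s: "0 \<le> s" "s < t1"
        have dd: "(x has_vector_derivative Phi (x s)) (at s within {s..})" using xd s by simp
        note cs = vd_comps[OF dd]
        show "((\<lambda>s. L (x s)) has_real_derivative D s) (at s within {s..}) \<and> D s \<le> 0"
        proof
          show "((\<lambda>s. L (x s)) has_real_derivative D s) (at s within {s..})"
            unfolding L_def D_def
            by (rule derivative_eq_intros cs refl | simp)+ (simp add: algebra_simps)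
        next
          define y where "y = x s"
          have dy: "dist y (q,q,a,b) \<le> r" using before[OF s] rho by (simp add: y_def e_def)
          have cy: "in_cube y" using xcube s by (simp add: y_def)
          note h = H[OF dy cy]
          define U where "U = \<bar>fst y - q\<bar> + \<bar>fst (snd y) - q\<bar>"
          have U0: "U \<ge> 0" by (simp add: U_def)
          have sq: "(dist y e)^2 = (fst y - q)^2 + (fst (snd y) - q)^2 + (fst (snd (snd y)) - a)^2 + (snd (snd (snd y)) - b)^2"
            unfolding e_def by (rule dist_sq)
          have dle1: "dist y e \<le> 1" using dy r by (simp add: e_def)
          have w1le: "\<bar>fst (snd (snd y)) - a\<bar> \<le> 1"
          proof -
            have "\<bar>fst (snd (snd y)) - a\<bar>^2 \<le> (dist y e)^2" using sq by simp
            then have "\<bar>fst (snd (snd y)) - a\<bar> \<le> dist y e" by (rule power2_le_imp_le) simp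
            then show ?thesis using dle1 by simp
          qed
          have w2le: "\<bar>snd (snd (snd y)) - b\<bar> \<le> 1"
          proof -
            have "\<bar>snd (snd (snd y)) - b\<bar>^2 \<le> (dist y e)^2" using sq by simp
            then have "\<bar>snd (snd (snd y)) - b\<bar> \<le> dist y e" by (rule power2_le_imp_le) simp
            then show ?thesis using dle1 by simp
          qed
          have t3: "(fst (snd (snd y)) - a) * fst (snd (snd (Phi y))) \<le> M * U"
          proof -
            have "(fst (snd (snd y)) - a) * fst (snd (snd (Phi y))) \<le> \<bar>fst (snd (snd y)) - a\<bar> * \<bar>fst (snd (snd (Phi y)))\<bar>"
              by (metis abs_ge_self abs_mult)
            also have "\<dots> \<le> 1 * (M * U)"
              using h w1le by (intro mult_mono) (auto simp: U_def)
            finally show ?thesis by simp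
          qed
          have t4: "(snd (snd (snd y)) - b) * snd (snd (snd (Phi y))) \<le> M * U"
          proof -
            have "(snd (snd (snd y)) - b) * snd (snd (snd (Phi y))) \<le> \<bar>snd (snd (snd y)) - b\<bar> * \<bar>snd (snd (snd (Phi y)))\<bar>"
              by (metis abs_ge_self abs_mult)
            also have "\<dots> \<le> 1 * (M * U)"
              using h w2le by (intro mult_mono) (auto simp: U_def)
            finally show ?thesis by simp
          qed
          have t12: "K * ((fst y - q) * fst (Phi y) + (fst (snd y) - q) * fst (snd (Phi y))) \<le> K * (- c * U)"
            using h K1 by (intro mult_left_mono) (auto simp: U_def algebra_simps)
          have KU: "K * c * U \<ge> 2 * M * U" using Kc U0 by (rule mult_right_mono)
          show "D s \<le> 0" using t3 t4 t12 KU unfolding D_def y_def[symmetric]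
            by (simp add: algebra_simps)
        qed
      qed
      have "L (x 0) \<le> K * (dist (x 0) e)^2" by (rule Lle)
      also have "\<dots> \<le> K * \<delta>^2" using x0 K1
        by (intro mult_left_mono power_mono) auto
      also have "\<dots> < \<rho>^2" by (rule Kdel)
      also have "\<dots> \<le> (dist (x t1) e)^2" using xt1 rho by (intro power_mono) auto
      also have "\<dots> \<le> L (x t1)" by (rule Lge)
      finally show False using mono by simp
    qed
  qed
qed

definition Gf :: "real \<Rightarrow> real \<Rightarrow> real \<Rightarrow> real \<Rightarrow> real \<Rightarrow> real \<Rightarrow> real" where
  "Gf R S T P w p = p * (R - T) + (1 - p) * (S - P) + w * (T - S) / 2"

lemma Vpay_eq: "Vpay R S T P po pp = po*pp*R + po*(1-pp)*S + (1-po)*pp*T + (1-po)*(1-pp)*P"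
  by (simp add: Vpay_def strat_def rpay_def)

lemma deriv_Vt1: "deriv (\<lambda>q. Vt1 R S T P w q p2) p = Gf R S T P w p2"
proof (rule DERIV_imp_deriv)
  show "((\<lambda>q. Vt1 R S T P w q p2) has_real_derivative Gf R S T P w p2) (at p)"
    unfolding Vt1_def Vsoc_def V1_def V2_def Vpay_eq Gf_def
    by (rule derivative_eq_intros refl | simp)+ (simp add: algebra_simps divide_simps)
qed

lemma deriv_Vt2: "deriv (\<lambda>q. Vt2 R S T P w p1 q) p = Gf R S T P w p1"
proof (rule DERIV_imp_deriv)
  show "((\<lambda>q. Vt2 R S T P w p1 q) has_real_derivative Gf R S T P w p1) (at p)"
    unfolding Vt2_def Vsoc_def V1_def V2_def Vpay_eq Gf_def
    by (rule derivative_eq_intros refl | simp)+ (simp add: algebra_simps divide_simps)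
qed

lemma PF_eq: "PF_field R S T P \<epsilon> y =
  (proj1 (fst y) (Gf R S T P (fst (snd (snd y))) (fst (snd y))),
   proj1 (fst (snd y)) (Gf R S T P (snd (snd (snd y))) (fst y)),
   proj1 (fst (snd (snd y))) (\<epsilon> * ((fst y - fst (snd y)) * (S - T) / 2)),
   proj1 (snd (snd (snd y))) (\<epsilon> * ((fst (snd y) - fst y) * (S - T) / 2)))"
  unfolding PF_field_def F_field_def Let_def p1_of_def p2_of_def w1_of_def w2_of_def deriv_Vt1 deriv_Vt2
  by (simp add: Vsoc_def V1_def V2_def Vpay_eq algebra_simps divide_simps)

lemma comps_le:
  fixes y :: state
  shows "\<bar>fst y - q\<bar> \<le> dist y (q,q,a,b)" "\<bar>fst (snd y) - q\<bar> \<le> dist y (q,q,a,b)"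
    "\<bar>fst (snd (snd y)) - a\<bar> \<le> dist y (q,q,a,b)" "\<bar>snd (snd (snd y)) - b\<bar> \<le> dist y (q,q,a,b)"
proof -
  note sq = dist_sq[of y q a b]
  show "\<bar>fst y - q\<bar> \<le> dist y (q,q,a,b)"
    by (rule power2_le_imp_le) (use sq in simp_all)
  show "\<bar>fst (snd y) - q\<bar> \<le> dist y (q,q,a,b)"
    by (rule power2_le_imp_le) (use sq in simp_all)
  show "\<bar>fst (snd (snd y)) - a\<bar> \<le> dist y (q,q,a,b)"
    by (rule power2_le_imp_le) (use sq in simp_all)
  show "\<bar>snd (snd (snd y)) - b\<bar> \<le> dist y (q,q,a,b)"
    by (rule power2_le_imp_le) (use sq in simp_all)
qed

lemma Gf_close:
  assumes "\<bar>p - p0\<bar> \<le> r" "\<bar>w - w0\<bar> \<le> r"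
  shows "\<bar>Gf R S T P w p - Gf R S T P w0 p0\<bar> \<le> r * (\<bar>R - T - S + P\<bar> + \<bar>T - S\<bar>)"
proof -
  have eq: "Gf R S T P w p - Gf R S T P w0 p0 = (p - p0) * (R - T - S + P) + (w - w0) * ((T - S) / 2)"
    by (simp add: Gf_def field_simps)
  have "\<bar>(p - p0) * (R - T - S + P)\<bar> \<le> r * \<bar>R - T - S + P\<bar>"
    using assms by (simp add: abs_mult mult_right_mono)
  moreover have "\<bar>(w - w0) * ((T - S) / 2)\<bar> \<le> r * \<bar>T - S\<bar>"
  proof -
    have "\<bar>(w - w0) * ((T - S) / 2)\<bar> = \<bar>w - w0\<bar> * (\<bar>T - S\<bar> / 2)" by (simp add: abs_mult)
    also have "\<dots> \<le> r * (\<bar>T - S\<bar> / 2)" using assms by (intro mult_right_mono) auto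
    also have "\<dots> \<le> r * \<bar>T - S\<bar>" using assms by (intro mult_left_mono) auto
    finally show ?thesis .
  qed
  moreover have "\<bar>(p - p0) * (R - T - S + P) + (w - w0) * ((T - S) / 2)\<bar> \<le> \<bar>(p - p0) * (R - T - S + P)\<bar> + \<bar>(w - w0) * ((T - S) / 2)\<bar>"
    by (rule abs_triangle_ineq)
  moreover have "r * (\<bar>R - T - S + P\<bar> + \<bar>T - S\<bar>) = r * \<bar>R - T - S + P\<bar> + r * \<bar>T - S\<bar>"
    by (simp add: distrib_left)
  ultimately show ?thesis unfolding eq by linarith
qed

lemma proj1_abs: "\<bar>proj1 x f\<bar> \<le> \<bar>f\<bar>"
  by (simp add: proj1_def)

lemma wbound:
  assumes "\<epsilon> > 0"
  shows "\<bar>proj1 w (\<epsilon> * ((u - v) * (S - T) / 2))\<bar> \<le> (\<epsilon> * \<bar>S - T\<bar> / 2) * (\<bar>u - q\<bar> + \<bar>v - q\<bar>)"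
proof -
  have "\<bar>proj1 w (\<epsilon> * ((u - v) * (S - T) / 2))\<bar> \<le> \<bar>\<epsilon> * ((u - v) * (S - T) / 2)\<bar>" by (rule proj1_abs)
  also have "\<dots> = (\<epsilon> * \<bar>S - T\<bar> / 2) * \<bar>u - v\<bar>" using assms by (simp add: abs_mult)
  also have "\<dots> \<le> (\<epsilon> * \<bar>S - T\<bar> / 2) * (\<bar>u - q\<bar> + \<bar>v - q\<bar>)"
    using assms by (intro mult_left_mono) auto
  finally show ?thesis .
qed

lemma case1:
  fixes R S T P \<epsilon> w1 w2 :: real
  assumes "R > T" and "P > S" and eps: "\<epsilon> > 0"
    and w: "w1 \<in> {0..1}" "w2 \<in> {0..1}" "(T - S) / 2 * w1 > T - R" "(T - S) / 2 * w2 > T - R"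
  shows "equilibrium R S T P \<epsilon> (1, 1, w1, w2) \<and> stable R S T P \<epsilon> (1, 1, w1, w2)"
proof
  define g1 where "g1 = Gf R S T P w1 1"
  define g2 where "g2 = Gf R S T P w2 1"
  have g1: "g1 > 0" "g2 > 0" using w by (auto simp: g1_def g2_def Gf_def field_simps)
  show "equilibrium R S T P \<epsilon> (1, 1, w1, w2)"
    unfolding equilibrium_def PF_eq using g1 by (simp add: proj1_def g1_def g2_def zero_prod_def)
  define c where "c = min g1 g2 / 2"
  have c: "c > 0" "2 * c \<le> g1" "2 * c \<le> g2" using g1 by (auto simp: c_def)
  define B where "B = \<bar>R - T - S + P\<bar> + \<bar>T - S\<bar>"
  have B: "B \<ge> 0" by (simp add: B_def)
  define r where "r = min 1 (c / (B + 1))"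
  have r: "r > 0" "r \<le> 1" using c B by (auto simp: r_def)
  have rB: "r * B \<le> c"
  proof -
    have "r \<le> c / (B + 1)" by (simp add: r_def)
    then have "r * (B + 1) \<le> c" using B by (simp add: pos_le_divide_eq)
    moreover have "r * B \<le> r * (B + 1)" using r by simp
    ultimately show ?thesis by simp
  qed
  define M where "M = \<epsilon> * \<bar>S - T\<bar> / 2"
  have M: "M \<ge> 0" using eps by (simp add: M_def)
  have Gc: "Gf R S T P w p \<ge> c" if "\<bar>p - 1\<bar> \<le> r" "\<bar>w - w0\<bar> \<le> r" "2 * c \<le> Gf R S T P w0 1" for w p w0
  proof -
    have "\<bar>Gf R S T P w p - Gf R S T P w0 1\<bar> \<le> r * B" unfolding B_def by (rule Gf_close[OF that(1,2)])
    then show ?thesis using rB that(3) by linarith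
  qed
  have pcomp: "(p - 1) * proj1 p F \<le> - c * \<bar>p - 1\<bar>" if "p \<le> 1" "F \<ge> c" for p F
  proof (cases "p = 1")
    case True then show ?thesis by simp
  next
    case False
    then have "proj1 p F = F" using that c by (simp add: proj1_def)
    moreover have "(p - 1) * F \<le> (p - 1) * c" using that False by (intro mult_left_mono_neg) auto
    ultimately show ?thesis using that False by (simp add: algebra_simps)
  qed
  have H: "(fst y - 1) * fst (PF_field R S T P \<epsilon> y) \<le> - c * \<bar>fst y - 1\<bar> \<and>
     (fst (snd y) - 1) * fst (snd (PF_field R S T P \<epsilon> y)) \<le> - c * \<bar>fst (snd y) - 1\<bar> \<and>
     \<bar>fst (snd (snd (PF_field R S T P \<epsilon> y)))\<bar> \<le> M * (\<bar>fst y - 1\<bar> + \<bar>fst (snd y) - 1\<bar>) \<and>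
     \<bar>snd (snd (snd (PF_field R S T P \<epsilon> y)))\<bar> \<le> M * (\<bar>fst y - 1\<bar> + \<bar>fst (snd y) - 1\<bar>)"
    if dy: "dist y (1,1,w1,w2) \<le> r" and cy: "in_cube y" for y
  proof -
    note cl = comps_le[where y=y and q=1 and a=w1 and b=w2]
    have cube: "fst y \<le> 1" "fst (snd y) \<le> 1" using cy by (auto simp: in_cube_def p1_of_def p2_of_def)
    have G1: "Gf R S T P (fst (snd (snd y))) (fst (snd y)) \<ge> c"
      using Gc[of "fst (snd y)" "fst (snd (snd y))" w1] cl(2,3) dy c(2) unfolding g1_def by linarith
    have G2: "Gf R S T P (snd (snd (snd y))) (fst y) \<ge> c"
      using Gc[of "fst y" "snd (snd (snd y))" w2] cl(1,4) dy c(3) unfolding g2_def by linarith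
    have wb1: "\<bar>fst (snd (snd (PF_field R S T P \<epsilon> y)))\<bar> \<le> M * (\<bar>fst y - 1\<bar> + \<bar>fst (snd y) - 1\<bar>)"
      unfolding PF_eq M_def fst_conv snd_conv
      by (rule wbound[where q=1, OF eps])
    have wb2: "\<bar>snd (snd (snd (PF_field R S T P \<epsilon> y)))\<bar> \<le> M * (\<bar>fst (snd y) - 1\<bar> + \<bar>fst y - 1\<bar>)"
      unfolding PF_eq M_def fst_conv snd_conv
      by (rule wbound[where q=1, OF eps])
    have pb1: "(fst y - 1) * fst (PF_field R S T P \<epsilon> y) \<le> - c * \<bar>fst y - 1\<bar>"
      unfolding PF_eq fst_conv snd_conv by (rule pcomp[OF cube(1) G1])
    have pb2: "(fst (snd y) - 1) * fst (snd (PF_field R S T P \<epsilon> y)) \<le> - c * \<bar>fst (snd y) - 1\<bar>"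
      unfolding PF_eq fst_conv snd_conv by (rule pcomp[OF cube(2) G2])
    show ?thesis using wb1 wb2 pb1 pb2 by (simp only: add.commute conj_absorb)
  qed
  show "stable R S T P \<epsilon> (1, 1, w1, w2)"
    unfolding stable_def trajectory_def by (rule stab_general[OF c(1) M r H])
qed

lemma case2:
  fixes R S T P \<epsilon> w1 w2 :: real
  assumes "R > T" and "P > S" and eps: "\<epsilon> > 0"
    and w: "w1 \<in> {0..1}" "w2 \<in> {0..1}" "(T - S) / 2 * w1 < P - S" "(T - S) / 2 * w2 < P - S"
  shows "equilibrium R S T P \<epsilon> (0, 0, w1, w2) \<and> stable R S T P \<epsilon> (0, 0, w1, w2)"
proof
  define g1 where "g1 = Gf R S T P w1 0"
  define g2 where "g2 = Gf R S T P w2 0"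
  have g1: "g1 < 0" "g2 < 0" using w by (auto simp: g1_def g2_def Gf_def field_simps)
  show "equilibrium R S T P \<epsilon> (0, 0, w1, w2)"
    unfolding equilibrium_def PF_eq using g1 by (simp add: proj1_def g1_def g2_def zero_prod_def)
  define c where "c = min (- g1) (- g2) / 2"
  have c: "c > 0" "g1 \<le> - 2 * c" "g2 \<le> - 2 * c" using g1 by (auto simp: c_def)
  define B where "B = \<bar>R - T - S + P\<bar> + \<bar>T - S\<bar>"
  have B: "B \<ge> 0" by (simp add: B_def)
  define r where "r = min 1 (c / (B + 1))"
  have r: "r > 0" "r \<le> 1" using c B by (auto simp: r_def)
  have rB: "r * B \<le> c"
  proof -
    have "r \<le> c / (B + 1)" by (simp add: r_def)
    then have "r * (B + 1) \<le> c" using B by (simp add: pos_le_divide_eq)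
    moreover have "r * B \<le> r * (B + 1)" using r by simp
    ultimately show ?thesis by simp
  qed
  define M where "M = \<epsilon> * \<bar>S - T\<bar> / 2"
  have M: "M \<ge> 0" using eps by (simp add: M_def)
  have Gc: "Gf R S T P w p \<le> - c" if "\<bar>p - 0\<bar> \<le> r" "\<bar>w - w0\<bar> \<le> r" "Gf R S T P w0 0 \<le> - 2 * c" for w p w0
  proof -
    have "\<bar>Gf R S T P w p - Gf R S T P w0 0\<bar> \<le> r * B" unfolding B_def by (rule Gf_close[OF that(1,2)])
    then show ?thesis using rB that(3) by linarith
  qed
  have pcomp: "(p - 0) * proj1 p F \<le> - c * \<bar>p - 0\<bar>" if "0 \<le> p" "F \<le> - c" for p F
  proof (cases "p = 0")
    case True then show ?thesis by simp
  next
    case False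
    then have "proj1 p F = F" using that c by (simp add: proj1_def)
    moreover have "(p - 0) * F \<le> (p - 0) * (- c)" using that False by (intro mult_left_mono) auto
    ultimately show ?thesis using that False by (simp add: algebra_simps)
  qed
  have H: "(fst y - 0) * fst (PF_field R S T P \<epsilon> y) \<le> - c * \<bar>fst y - 0\<bar> \<and>
     (fst (snd y) - 0) * fst (snd (PF_field R S T P \<epsilon> y)) \<le> - c * \<bar>fst (snd y) - 0\<bar> \<and>
     \<bar>fst (snd (snd (PF_field R S T P \<epsilon> y)))\<bar> \<le> M * (\<bar>fst y - 0\<bar> + \<bar>fst (snd y) - 0\<bar>) \<and>
     \<bar>snd (snd (snd (PF_field R S T P \<epsilon> y)))\<bar> \<le> M * (\<bar>fst y - 0\<bar> + \<bar>fst (snd y) - 0\<bar>)"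
    if dy: "dist y (0,0,w1,w2) \<le> r" and cy: "in_cube y" for y
  proof -
    note cl = comps_le[where y=y and q=0 and a=w1 and b=w2]
    have cube: "0 \<le> fst y" "0 \<le> fst (snd y)" using cy by (auto simp: in_cube_def p1_of_def p2_of_def)
    have G1: "Gf R S T P (fst (snd (snd y))) (fst (snd y)) \<le> - c"
      using Gc[of "fst (snd y)" "fst (snd (snd y))" w1] cl(2,3) dy c(2) unfolding g1_def by linarith
    have G2: "Gf R S T P (snd (snd (snd y))) (fst y) \<le> - c"
      using Gc[of "fst y" "snd (snd (snd y))" w2] cl(1,4) dy c(3) unfolding g2_def by linarith
    have wb1: "\<bar>fst (snd (snd (PF_field R S T P \<epsilon> y)))\<bar> \<le> M * (\<bar>fst y - 0\<bar> + \<bar>fst (snd y) - 0\<bar>)"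
      unfolding PF_eq M_def fst_conv snd_conv
      by (rule wbound[where q=0, OF eps])
    have wb2: "\<bar>snd (snd (snd (PF_field R S T P \<epsilon> y)))\<bar> \<le> M * (\<bar>fst (snd y) - 0\<bar> + \<bar>fst y - 0\<bar>)"
      unfolding PF_eq M_def fst_conv snd_conv
      by (rule wbound[where q=0, OF eps])
    have pb1: "(fst y - 0) * fst (PF_field R S T P \<epsilon> y) \<le> - c * \<bar>fst y - 0\<bar>"
      unfolding PF_eq fst_conv snd_conv by (rule pcomp[OF cube(1) G1])
    have pb2: "(fst (snd y) - 0) * fst (snd (PF_field R S T P \<epsilon> y)) \<le> - c * \<bar>fst (snd y) - 0\<bar>"
      unfolding PF_eq fst_conv snd_conv by (rule pcomp[OF cube(2) G2])
    show ?thesis using wb1 wb2 pb1 pb2 by (simp only: add.commute conj_absorb)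
  qed
  show "stable R S T P \<epsilon> (0, 0, w1, w2)"
    unfolding stable_def trajectory_def by (rule stab_general[where q=0, OF c(1) M r H])
qed



theorem corollary2:
  fixes R S T P \<epsilon> :: real
  assumes "R > T" and "P > S" and "\<epsilon> > 0"
  shows "(\<forall>w1 w2. w1 \<in> {0..1} \<and> w2 \<in> {0..1} \<and>
            (T - S) / 2 * w1 > T - R \<and> (T - S) / 2 * w2 > T - R \<longrightarrow>
            equilibrium R S T P \<epsilon> (1, 1, w1, w2) \<and> stable R S T P \<epsilon> (1, 1, w1, w2))
       \<and> (\<forall>w1 w2. w1 \<in> {0..1} \<and> w2 \<in> {0..1} \<and>
            (T - S) / 2 * w1 < P - S \<and> (T - S) / 2 * w2 < P - S \<longrightarrow>
            equilibrium R S T P \<epsilon> (0, 0, w1, w2) \<and> stable R S T P \<epsilon> (0, 0, w1, w2))"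
  using case1[OF assms] case2[OF assms] by blast

end
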